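(* Let $\mathbb C$ be a semi-abelian variety of universal algebras, $A$ an algebra in $\mathbb C$, and $X,Y$ subalgebras of $A$. Then $[X,Y]_{\mathbb C,A}=[X,Y]_{A\mid 1}$.
   Context: A semi-abelian variety is a variety of universal algebras which, as a category, is pointed and Bourn-protomodular (equivalently, a pointed classically ideal determined variety); $0$ denotes its unique constant. A term $t(\mathbf w_1,\dots,\mathbf w_k,\mathbf x_1,\dots,\mathbf x_m,\mathbf y_1,\dots,\mathbf y_n)$ of $\mathbb C$, with $\{\mathbf x_1,\dots,\mathbf x_m\}$ and $\{\mathbf y_1,\dots,\mathbf y_n\}$ disjoint sets of variables, is a commutator term in $(\mathbf x_1,\dots,\mathbf x_m)$ and $(\mathbf y_1,\dots,\mathbf y_n)$ if the identities $t(\mathbf w_1,\dots,\mathbf w_k,0,\dots,0,\mathbf y_1,\dots,\mathbf y_n)=0=t(\mathbf w_1,\dots,\mathbf w_k,\mathbf x_1,\dots,\mathbf x_m,0,\dots,0)$ hold in $\mathbb C$. $[X,Y]_{\mathbb C,A}$ is the set of all elements $t_A(w_1,\dots,w_k,x_1,\dots,x_m,y_1,\dots,y_n)$ of $A$ where $t$ is such a commutator term, $w_i\in A$, $x_i\in X$, $y_i\in Y$. $[X,Y]_{A\mid 1}$ is the image under the homomorphism $[1_A,x,y]\colon A+X+Y\to A$ (with $x,y$ the inclusions) of the kernel (preimage of $0$) of the homomorphism $\langle[\iota_1,\iota_2,0],[\iota_1,0,\iota_2]\rangle\colon A+X+Y\to (A+X)\times_A(A+Y)$, where $\iota_i$ are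 coproduct injections and $(A+X)\times_A(A+Y)$ is the pullback of $[1,0]\colon A+X\to A$ and $[1,0]\colon A+Y\to A$. *)

theory Defs
  imports Main
begin

datatype ('f, 'v) trm = Var 'v | Fun 'f "('f, 'v) trm list"

fun vars :: "('f, 'v) trm \<Rightarrow> 'v set" where
  "vars (Var v) = {v}"
| "vars (Fun f ts) = (\<Union>t\<in>set ts. vars t)"

fun wf_trm :: "('f \<Rightarrow> nat) \<Rightarrow> ('f, 'v) trm \<Rightarrow> bool" where
  "wf_trm ar (Var v) = True"
| "wf_trm ar (Fun f ts) = (length ts = ar f \<and> (\<forall>t\<in>set ts. wf_trm ar t))"

definition wf_over :: "('f \<Rightarrow> nat) \<Rightarrow> 'v set \<Rightarrow> ('f, 'v) trm \<Rightarrow> bool" where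
  "wf_over ar G t \<longleftrightarrow> wf_trm ar t \<and> vars t \<subseteq> G"

fun subst :: "('v \<Rightarrow> ('f, 'w) trm) \<Rightarrow> ('f, 'v) trm \<Rightarrow> ('f, 'w) trm" where
  "subst \<sigma> (Var v) = \<sigma> v"
| "subst \<sigma> (Fun f ts) = Fun f (map (subst \<sigma>) ts)"

text \<open>A ground (variable-free) term, viewed as a term over any variable type.\<close>
definition ground_as :: "('f, nat) trm \<Rightarrow> ('f, 'w) trm" where
  "ground_as t = subst (\<lambda>_. Var undefined) t"

text \<open>An algebra is a carrier U with interpretation I of the operation symbols
(only applied to argument lists of the right length inside U).\<close>

fun eval :: "('f \<Rightarrow> 'a list \<Rightarrow> 'a) \<Rightarrow> ('v \<Rightarrow> 'a) \<Rightarrow> ('f, 'v) trm \<Rightarrow> 'a" where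
  "eval I \<rho> (Var v) = \<rho> v"
| "eval I \<rho> (Fun f ts) = I f (map (eval I \<rho>) ts)"

definition closed_under :: "('f \<Rightarrow> nat) \<Rightarrow> ('f \<Rightarrow> 'a list \<Rightarrow> 'a) \<Rightarrow> 'a set \<Rightarrow> bool" where
  "closed_under ar I U \<longleftrightarrow>
     (\<forall>f as. length as = ar f \<and> set as \<subseteq> U \<longrightarrow> I f as \<in> U)"

text \<open>Model of the set of identities E (an algebra of the variety C = Mod(E)).\<close>
definition model :: "('f \<Rightarrow> nat) \<Rightarrow> (('f, nat) trm \<times> ('f, nat) trm) set
     \<Rightarrow> 'a set \<Rightarrow> ('f \<Rightarrow> 'a list \<Rightarrow> 'a) \<Rightarrow> bool" where
  "model ar E U I \<longleftrightarrow> closed_under ar I U \<and>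
     (\<forall>(s, t)\<in>E. \<forall>\<rho>. (\<forall>v. \<rho> v \<in> U) \<longrightarrow> eval I \<rho> s = eval I \<rho> t)"

definition is_hom :: "('f \<Rightarrow> nat) \<Rightarrow> 'a set \<Rightarrow> ('f \<Rightarrow> 'a list \<Rightarrow> 'a)
     \<Rightarrow> 'b set \<Rightarrow> ('f \<Rightarrow> 'b list \<Rightarrow> 'b) \<Rightarrow> ('a \<Rightarrow> 'b) \<Rightarrow> bool" where
  "is_hom ar U I V J h \<longleftrightarrow> (\<forall>u\<in>U. h u \<in> V) \<and>
     (\<forall>f as. length as = ar f \<and> set as \<subseteq> U \<longrightarrow> h (I f as) = J f (map h as))"

definition gen_sub :: "('f \<Rightarrow> nat) \<Rightarrow> ('f \<Rightarrow> 'a list \<Rightarrow> 'a) \<Rightarrow> 'a set \<Rightarrow> 'a set" where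
  "gen_sub ar I S = \<Inter>{T. S \<subseteq> T \<and> closed_under ar I T}"

inductive eqc :: "('f \<Rightarrow> nat) \<Rightarrow> (('f, nat) trm \<times> ('f, nat) trm) set
     \<Rightarrow> ('f, nat) trm \<Rightarrow> ('f, nat) trm \<Rightarrow> bool"
  for ar E where
  eqc_refl: "wf_trm ar t \<Longrightarrow> eqc ar E t t"
| eqc_sym: "eqc ar E s t \<Longrightarrow> eqc ar E t s"
| eqc_trans: "eqc ar E s t \<Longrightarrow> eqc ar E t u \<Longrightarrow> eqc ar E s u"
| eqc_cong: "length ss = ar f \<Longrightarrow> list_all2 (eqc ar E) ss ts \<Longrightarrow>
     eqc ar E (Fun f ss) (Fun f ts)"
| eqc_ax: "(l, r) \<in> E \<Longrightarrow> (\<forall>n. wf_trm ar (\<sigma> n)) \<Longrightarrow>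
     eqc ar E (subst \<sigma> l) (subst \<sigma> r)"
monos list_all2_mono

text \<open>Equality in the C-algebra presented by generators G and relations R:
the C-congruence on wf terms over G generated by the instances of E and by R.\<close>

inductive pres_eq :: "('f \<Rightarrow> nat) \<Rightarrow> (('f, nat) trm \<times> ('f, nat) trm) set
     \<Rightarrow> 'g set \<Rightarrow> (('f, 'g) trm \<Rightarrow> ('f, 'g) trm \<Rightarrow> bool)
     \<Rightarrow> ('f, 'g) trm \<Rightarrow> ('f, 'g) trm \<Rightarrow> bool"
  for ar E G R where
  pres_refl: "wf_over ar G t \<Longrightarrow> pres_eq ar E G R t t"
| pres_sym: "pres_eq ar E G R s t \<Longrightarrow> pres_eq ar E G R t s"
| pres_trans: "pres_eq ar E G R s t \<Longrightarrow> pres_eq ar E G R t u \<Longrightarrow> pres_eq ar E G R s u"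
| pres_cong: "length ss = ar f \<Longrightarrow> list_all2 (pres_eq ar E G R) ss ts \<Longrightarrow>
     pres_eq ar E G R (Fun f ss) (Fun f ts)"
| pres_ax: "(l, r) \<in> E \<Longrightarrow> (\<forall>n. wf_over ar G (\<sigma> n)) \<Longrightarrow>
     pres_eq ar E G R (subst \<sigma> l) (subst \<sigma> r)"
| pres_rel: "R s t \<Longrightarrow> pres_eq ar E G R s t"
monos list_all2_mono

text \<open>Diagram (operation table) of an algebra (U, I) whose elements are
inserted as generators via the tag function tg.\<close>
definition diag :: "('f \<Rightarrow> nat) \<Rightarrow> ('f \<Rightarrow> 'a list \<Rightarrow> 'a) \<Rightarrow> ('a \<Rightarrow> 'g) \<Rightarrow> 'a set
     \<Rightarrow> ('f, 'g) trm \<Rightarrow> ('f, 'g) trm \<Rightarrow> bool" where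
  "diag ar I tg U s t \<longleftrightarrow> (\<exists>f as. length as = ar f \<and> set as \<subseteq> U \<and>
     s = Fun f (map (Var \<circ> tg) as) \<and> t = Var (tg (I f as)))"

text \<open>Binary coproduct A + X (X with the operations of A): generators Inl a, Inr x.\<close>
definition gens2 :: "'a set \<Rightarrow> 'a set \<Rightarrow> ('a + 'a) set" where
  "gens2 A X = Inl ` A \<union> Inr ` X"

definition rel2 :: "('f \<Rightarrow> nat) \<Rightarrow> ('f \<Rightarrow> 'a list \<Rightarrow> 'a) \<Rightarrow> 'a set \<Rightarrow> 'a set
     \<Rightarrow> ('f, 'a + 'a) trm \<Rightarrow> ('f, 'a + 'a) trm \<Rightarrow> bool" where
  "rel2 ar I A X s t \<longleftrightarrow> diag ar I Inl A s t \<or> diag ar I Inr X s t"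

definition eq2 where
  "eq2 ar E I A X = pres_eq ar E (gens2 A X) (rel2 ar I A X)"

text \<open>Ternary coproduct A + X + Y: generators Inl a, Inr (Inl x), Inr (Inr y).\<close>
definition gens3 :: "'a set \<Rightarrow> 'a set \<Rightarrow> 'a set \<Rightarrow> ('a + 'a + 'a) set" where
  "gens3 A X Y = Inl ` A \<union> (Inr \<circ> Inl) ` X \<union> (Inr \<circ> Inr) ` Y"

text \<open>The coproduct maps [iota1, iota2, 0] : A+X+Y -> A+X and
[iota1, 0, iota2] : A+X+Y -> A+Y on representing terms.\<close>
definition to_AX :: "('f, nat) trm \<Rightarrow> ('f, 'a + 'a + 'a) trm \<Rightarrow> ('f, 'a + 'a) trm" where
  "to_AX z = subst (\<lambda>g. case g of Inl a \<Rightarrow> Var (Inl a) | Inr (Inl x) \<Rightarrow> Var (Inr x)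
                                   | Inr (Inr y) \<Rightarrow> ground_as z)"

definition to_AY :: "('f, nat) trm \<Rightarrow> ('f, 'a + 'a + 'a) trm \<Rightarrow> ('f, 'a + 'a) trm" where
  "to_AY z = subst (\<lambda>g. case g of Inl a \<Rightarrow> Var (Inl a) | Inr (Inl x) \<Rightarrow> ground_as z
                                   | Inr (Inr y) \<Rightarrow> Var (Inr y))"

text \<open>The map [1_A, x, y] : A+X+Y -> A on representing terms.\<close>
definition fold3 :: "('f \<Rightarrow> 'a list \<Rightarrow> 'a) \<Rightarrow> ('f, 'a + 'a + 'a) trm \<Rightarrow> 'a" where
  "fold3 I t = eval I (\<lambda>g. case g of Inl a \<Rightarrow> a | Inr (Inl x) \<Rightarrow> x | Inr (Inr y) \<Rightarrow> y) t"

text \<open>[X,Y]_{A|1}: image under [1_A,x,y] of the kernel of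
<[iota1,iota2,0],[iota1,0,iota2]> : A+X+Y -> (A+X) x_A (A+Y), whose zero is (0,0).\<close>
definition comm_A1 :: "('f \<Rightarrow> nat) \<Rightarrow> (('f, nat) trm \<times> ('f, nat) trm) set \<Rightarrow> ('f, nat) trm
     \<Rightarrow> 'a set \<Rightarrow> ('f \<Rightarrow> 'a list \<Rightarrow> 'a) \<Rightarrow> 'a set \<Rightarrow> 'a set \<Rightarrow> 'a set" where
  "comm_A1 ar E z A I X Y =
     {fold3 I t | t. wf_over ar (gens3 A X Y) t \<and>
        eq2 ar E I A X (to_AX z t) (ground_as z) \<and>
        eq2 ar E I A Y (to_AY z t) (ground_as z)}"

text \<open>t is a commutator term in the variables Xv and Yv (all other variables of t
play the role of the w's), with respect to the constant z of the variety.\<close>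
definition comm_term :: "('f \<Rightarrow> nat) \<Rightarrow> (('f, nat) trm \<times> ('f, nat) trm) set \<Rightarrow> ('f, nat) trm
     \<Rightarrow> nat set \<Rightarrow> nat set \<Rightarrow> ('f, nat) trm \<Rightarrow> bool" where
  "comm_term ar E z Xv Yv t \<longleftrightarrow> wf_trm ar t \<and> Xv \<inter> Yv = {} \<and>
     eqc ar E (subst (\<lambda>v. if v \<in> Xv then z else Var v) t) z \<and>
     eqc ar E (subst (\<lambda>v. if v \<in> Yv then z else Var v) t) z"

definition comm_CA :: "('f \<Rightarrow> nat) \<Rightarrow> (('f, nat) trm \<times> ('f, nat) trm) set \<Rightarrow> ('f, nat) trm
     \<Rightarrow> 'a set \<Rightarrow> ('f \<Rightarrow> 'a list \<Rightarrow> 'a) \<Rightarrow> 'a set \<Rightarrow> 'a set \<Rightarrow> 'a set" where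
  "comm_CA ar E z A I X Y =
     {eval I \<rho> t | t \<rho> Xv Yv. comm_term ar E z Xv Yv t \<and> (\<forall>v. \<rho> v \<in> A) \<and>
        \<rho> ` Xv \<subseteq> X \<and> \<rho> ` Yv \<subseteq> Y}"

text \<open>Pointed: z is a constant (well-formed ground term) and every constant equals z
in C, i.e. the initial algebra F(empty) is the one-element algebra.\<close>
definition pointed_var :: "('f \<Rightarrow> nat) \<Rightarrow> (('f, nat) trm \<times> ('f, nat) trm) set
     \<Rightarrow> ('f, nat) trm \<Rightarrow> bool" where
  "pointed_var ar E z \<longleftrightarrow> wf_trm ar z \<and> vars z = {} \<and>
     (\<forall>t. wf_trm ar t \<and> vars t = {} \<longrightarrow> eqc ar E t z)"

text \<open>Bourn-protomodularity for a pointed variety (split short five lemma form):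
for every split epimorphism p : B -> D with section s in C, the kernel of p and
s jointly strongly epimorphic, i.e. ker p together with s(D) generates B.
Algebras are quantified over carriers of the type 'b.\<close>
definition protomodular_on :: "('f \<Rightarrow> nat) \<Rightarrow> (('f, nat) trm \<times> ('f, nat) trm) set
     \<Rightarrow> ('f, nat) trm \<Rightarrow> 'b itself \<Rightarrow> bool" where
  "protomodular_on ar E z (_ :: 'b itself) \<longleftrightarrow>
     (\<forall>(B :: 'b set) IB (D :: 'b set) ID p s.
        model ar E B IB \<and> model ar E D ID \<and> is_hom ar B IB D ID p \<and> is_hom ar D ID B IB s \<and>
        (\<forall>d\<in>D. p (s d) = d) \<longrightarrow>
        B \<subseteq> gen_sub ar IB ({b \<in> B. p b = eval ID (\<lambda>_. undefined) z} \<union> s ` D))"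

definition semi_abelian_on where
  "semi_abelian_on ar E z T \<longleftrightarrow>
     (\<forall>(l, r)\<in>E. wf_trm ar l \<and> wf_trm ar r) \<and> pointed_var ar E z \<and> protomodular_on ar E z T"

end

theory Submission
  imports Defs
begin


lemma subst_subst: "subst \<sigma> (subst \<tau> t) = subst (\<lambda>v. subst \<sigma> (\<tau> v)) t"
  by (induction t) auto

lemma subst_cong: "(\<And>v. v \<in> vars t \<Longrightarrow> \<sigma> v = \<sigma>' v) \<Longrightarrow> subst \<sigma> t = subst \<sigma>' t"
  by (induction t) auto

lemma subst_Var[simp]: "subst Var t = t"
  by (induction t) (auto simp: map_idI)

lemma vars_subst: "vars (subst \<sigma> t) = (\<Union>v\<in>vars t. vars (\<sigma> v))"
  by (induction t) auto

lemma wf_subst: "wf_trm ar t \<Longrightarrow> (\<And>v. v \<in> vars t \<Longrightarrow> wf_trm ar (\<sigma> v)) \<Longrightarrow> wf_trm ar (subst \<sigma> t)"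
  by (induction t) auto

lemma eval_subst: "eval I \<rho> (subst \<sigma> t) = eval I (\<lambda>v. eval I \<rho> (\<sigma> v)) t"
  by (induction t) (auto intro!: arg_cong[where f="I _"])

lemma eval_cong: "(\<And>v. v \<in> vars t \<Longrightarrow> \<rho> v = \<rho>' v) \<Longrightarrow> eval I \<rho> t = eval I \<rho>' t"
proof (induction t)
  case (Fun f ts)
  have "map (eval I \<rho>) ts = map (eval I \<rho>') ts"
    by (rule map_cong[OF refl], rule Fun.IH) (use Fun.prems in auto)
  then show ?case by (metis eval.simps(2))
qed simp

lemma eval_closed: "closed_under ar I U \<Longrightarrow> wf_trm ar t \<Longrightarrow> (\<And>v. v \<in> vars t \<Longrightarrow> \<rho> v \<in> U) \<Longrightarrow> eval I \<rho> t \<in> U"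
proof (induction t)
  case (Fun f ts)
  have "set (map (eval I \<rho>) ts) \<subseteq> U"
    using Fun by auto
  then show ?case using Fun.prems unfolding closed_under_def by simp
qed auto

lemma ground_subst: "vars t = {} \<Longrightarrow> subst \<sigma> t = subst \<sigma>' t"
  by (rule subst_cong) auto

lemma ground_subst_id: "vars t = {} \<Longrightarrow> subst \<sigma> t = t"
  using ground_subst[of t \<sigma> Var] by simp

lemma ground_eval: "vars t = {} \<Longrightarrow> eval I \<rho> t = eval I \<rho>' t"
  by (rule eval_cong) auto

lemma finite_vars: "finite (vars t)"
  by (induction t) auto

lemma list_all2_map_eqI: "list_all2 (\<lambda>x y. f x = g y) xs ys \<Longrightarrow> map f xs = map g ys"
  by (induction rule: list_all2_induct) auto

lemma eqc_wf:
  assumes "eqc ar E s t" "\<forall>(l, r)\<in>E. wf_trm ar l \<and> wf_trm ar r"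
  shows "wf_trm ar s \<and> wf_trm ar t"
  using assms(1)
proof (induction rule: eqc.induct)
  case (eqc_cong ss f ts)
  then have "length ts = ar f" by (simp add: list_all2_lengthD)
  moreover have "\<forall>x\<in>set ss. wf_trm ar x" "\<forall>x\<in>set ts. wf_trm ar x"
    using eqc_cong(2) by (auto simp: list_all2_conv_all_nth in_set_conv_nth)
  ultimately show ?case using eqc_cong(1) by simp
next
  case (eqc_ax l r \<sigma>)
  then show ?case using assms(2) by (auto intro: wf_subst)
qed auto

lemma eqc_subst:
  assumes "eqc ar E s t" "\<forall>n. wf_trm ar (\<sigma> n)"
  shows "eqc ar E (subst \<sigma> s) (subst \<sigma> t)"
  using assms(1)
proof (induction rule: eqc.induct)
  case (eqc_refl t)
  then show ?case using assms(2) by (auto intro!: eqc.eqc_refl wf_subst)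
next
  case (eqc_sym s t)
  then show ?case by (blast intro: eqc.eqc_sym)
next
  case (eqc_trans s t u)
  then show ?case by (blast intro: eqc.eqc_trans)
next
  case (eqc_cong ss f ts)
  have "list_all2 (eqc ar E) (map (subst \<sigma>) ss) (map (subst \<sigma>) ts)"
    using eqc_cong(2) by (auto simp: list.rel_map elim: list_all2_mono)
  then show ?case using eqc_cong(1) by (auto intro: eqc.eqc_cong)
next
  case (eqc_ax l r \<tau>)
  have "eqc ar E (subst (\<lambda>v. subst \<sigma> (\<tau> v)) l) (subst (\<lambda>v. subst \<sigma> (\<tau> v)) r)"
    using eqc_ax assms(2) by (intro eqc.eqc_ax) (auto intro: wf_subst)
  then show ?case by (simp add: subst_subst)
qed

lemma eqc_subst_cong:
  assumes "wf_trm ar u" "\<And>v. v \<in> vars u \<Longrightarrow> eqc ar E (\<sigma> v) (\<sigma>' v)"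
  shows "eqc ar E (subst \<sigma> u) (subst \<sigma>' u)"
  using assms
proof (induction u)
  case (Var x)
  then show ?case by simp
next
  case (Fun f ts)
  have "list_all2 (eqc ar E) (map (subst \<sigma>) ts) (map (subst \<sigma>') ts)"
    using Fun by (auto simp: list.rel_map intro!: list.rel_refl_strong)
  then show ?case using Fun.prems by (auto intro: eqc.eqc_cong)
qed

lemma eqc_eval:
  assumes "eqc ar E s t" "model ar E A I" "\<forall>v. \<rho> v \<in> A"
  shows "eval I \<rho> s = eval I \<rho> t"
  using assms(1)
proof (induction rule: eqc.induct)
  case (eqc_cong ss f ts)
  then have "map (eval I \<rho>) ss = map (eval I \<rho>) ts"
    by (intro list_all2_map_eqI) (auto elim: list_all2_mono)
  then show ?case by simp
next
  case (eqc_ax l r \<sigma>)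
  have cl: "closed_under ar I A" using assms(2) by (simp add: model_def)
  have "\<forall>v. eval I \<rho> (\<sigma> v) \<in> A"
    using eqc_ax(2) assms(3) by (auto intro: eval_closed[OF cl])
  then show ?case using eqc_ax(1) assms(2)
    by (auto simp: eval_subst model_def)
qed auto

lemma pres_wf_over:
  assumes "pres_eq ar E G R s t" "\<forall>(l, r)\<in>E. wf_trm ar l \<and> wf_trm ar r"
     "\<And>s t. R s t \<Longrightarrow> wf_over ar G s \<and> wf_over ar G t"
  shows "wf_over ar G s \<and> wf_over ar G t"
  using assms(1)
proof (induction rule: pres_eq.induct)
  case (pres_cong ss f ts)
  then have "length ts = ar f" by (simp add: list_all2_lengthD)
  moreover have "\<forall>x\<in>set ss. wf_over ar G x" "\<forall>x\<in>set ts. wf_over ar G x"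
    using pres_cong(2) by (auto simp: list_all2_conv_all_nth in_set_conv_nth)
  ultimately show ?case using pres_cong(1) by (auto simp: wf_over_def)
next
  case (pres_ax l r \<sigma>)
  then show ?case using assms(2) by (auto intro: wf_subst simp: wf_over_def vars_subst)
qed (use assms(3) in auto)

lemma eqc_pres:
  assumes "eqc ar E s t" "\<forall>n. wf_over ar G (\<sigma> n)"
  shows "pres_eq ar E G R (subst \<sigma> s) (subst \<sigma> t)"
  using assms(1)
proof (induction rule: eqc.induct)
  case (eqc_refl t)
  then show ?case using assms(2)
    by (intro pres_eq.pres_refl) (fastforce intro!: wf_subst simp: wf_over_def vars_subst)
next
  case (eqc_sym s t)
  then show ?case by (blast intro: pres_eq.pres_sym)
next
  case (eqc_trans s t u)
  then show ?case by (blast intro: pres_eq.pres_trans)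
next
  case (eqc_cong ss f ts)
  have "list_all2 (pres_eq ar E G R) (map (subst \<sigma>) ss) (map (subst \<sigma>) ts)"
    using eqc_cong(2) by (auto simp: list.rel_map elim: list_all2_mono)
  then show ?case using eqc_cong(1) by (auto intro: pres_eq.pres_cong)
next
  case (eqc_ax l r \<tau>)
  have "pres_eq ar E G R (subst (\<lambda>v. subst \<sigma> (\<tau> v)) l) (subst (\<lambda>v. subst \<sigma> (\<tau> v)) r)"
    using eqc_ax assms(2) by (intro pres_eq.pres_ax) (auto intro: wf_subst simp: wf_over_def vars_subst)
  then show ?case by (simp add: subst_subst)
qed

lemma pres_eval:
  assumes "pres_eq ar E G R s t" "model ar E A I" "\<And>g. g \<in> G \<Longrightarrow> \<nu> g \<in> A"
    "\<And>s t. R s t \<Longrightarrow> eval I \<nu> s = eval I \<nu> t"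
  shows "eval I \<nu> s = eval I \<nu> t"
  using assms(1)
proof (induction rule: pres_eq.induct)
  case (pres_cong ss f ts)
  then have "map (eval I \<nu>) ss = map (eval I \<nu>) ts"
    by (intro list_all2_map_eqI) (auto elim: list_all2_mono)
  then show ?case by simp
next
  case (pres_ax l r \<sigma>)
  have cl: "closed_under ar I A" using assms(2) by (simp add: model_def)
  have "\<forall>v. eval I \<nu> (\<sigma> v) \<in> A"
    using pres_ax(2) assms(3) by (auto intro: eval_closed[OF cl] simp: wf_over_def)
  then show ?case using pres_ax(1) assms(2)
    by (auto simp: eval_subst model_def)
qed (use assms(4) in auto)



definition cls :: "('f \<Rightarrow> nat) \<Rightarrow> (('f, nat) trm \<times> ('f, nat) trm) set \<Rightarrow> ('f, nat) trm \<Rightarrow> ('f, nat) trm set"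
  where "cls ar E t = {s. eqc ar E s t}"
definition rep where "rep ar E c = (SOME t. wf_trm ar t \<and> c = cls ar E t)"
definition FI where "FI ar E f cs = cls ar E (Fun f (map (rep ar E) cs))"
definition FB where "FB ar E V = {cls ar E t | t. wf_trm ar t \<and> vars t \<subseteq> V}"

locale wfE =
  fixes ar :: "'f \<Rightarrow> nat" and E :: "(('f, nat) trm \<times> ('f, nat) trm) set"
  assumes wfE: "\<forall>(l, r)\<in>E. wf_trm ar l \<and> wf_trm ar r"
begin

lemma cls_eq: "wf_trm ar s \<Longrightarrow> wf_trm ar t \<Longrightarrow> cls ar E s = cls ar E t \<longleftrightarrow> eqc ar E s t"
proof
  assume "wf_trm ar s" "wf_trm ar t" "cls ar E s = cls ar E t"
  then show "eqc ar E s t" unfolding cls_def by (metis eqc.eqc_refl mem_Collect_eq)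
next
  assume "eqc ar E s t"
  then show "cls ar E s = cls ar E t" unfolding cls_def
    by (blast intro: eqc.eqc_trans eqc.eqc_sym)
qed

lemma rep_cls: assumes "wf_trm ar t" shows "wf_trm ar (rep ar E (cls ar E t)) \<and> eqc ar E (rep ar E (cls ar E t)) t"
proof -
  have "wf_trm ar (rep ar E (cls ar E t)) \<and> cls ar E t = cls ar E (rep ar E (cls ar E t))"
    unfolding rep_def by (rule someI[of _ t]) (use assms in simp)
  then show ?thesis using cls_eq assms by metis
qed

lemma FB_rep: "c \<in> FB ar E V \<Longrightarrow> wf_trm ar (rep ar E c) \<and> cls ar E (rep ar E c) = c"
proof -
  assume "c \<in> FB ar E V"
  then obtain t where t: "wf_trm ar t" "c = cls ar E t" unfolding FB_def by auto
  then show ?thesis using rep_cls[OF t(1)] cls_eq by metis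
qed

lemma eval_FI:
  "wf_trm ar u \<Longrightarrow> (\<And>v. v \<in> vars u \<Longrightarrow> wf_trm ar (\<sigma> v) \<and> \<rho> v = cls ar E (\<sigma> v))
   \<Longrightarrow> eval (FI ar E) \<rho> u = cls ar E (subst \<sigma> u)"
proof (induction u)
  case (Var x)
  then show ?case by simp
next
  case (Fun f ts)
  have wfs: "\<And>t. t \<in> set ts \<Longrightarrow> wf_trm ar (subst \<sigma> t)"
    using Fun.prems by (auto intro!: wf_subst)
  have m1: "map (rep ar E) (map (eval (FI ar E) \<rho>) ts) = map (\<lambda>t. rep ar E (cls ar E (subst \<sigma> t))) ts"
    unfolding map_map
  proof (rule map_cong[OF refl])
    fix x assume x: "x \<in> set ts"
    then have "eval (FI ar E) \<rho> x = cls ar E (subst \<sigma> x)"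
      using Fun.prems by (intro Fun.IH) auto
    then show "(rep ar E \<circ> eval (FI ar E) \<rho>) x = rep ar E (cls ar E (subst \<sigma> x))" by simp
  qed
  have m2: "list_all2 (eqc ar E) (map (\<lambda>t. rep ar E (cls ar E (subst \<sigma> t))) ts) (map (subst \<sigma>) ts)"
    using wfs rep_cls by (auto simp: list.rel_map intro!: list.rel_refl_strong)
  have "list_all2 (eqc ar E) (map (rep ar E) (map (eval (FI ar E) \<rho>) ts)) (map (subst \<sigma>) ts)"
    unfolding m1 by (rule m2)
  then have "eqc ar E (Fun f (map (rep ar E) (map (eval (FI ar E) \<rho>) ts))) (Fun f (map (subst \<sigma>) ts))"
    using Fun.prems by (auto intro!: eqc.eqc_cong)
  moreover have "wf_trm ar (Fun f (map (subst \<sigma>) ts))" using wfs Fun.prems by auto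
  moreover have "wf_trm ar (Fun f (map (rep ar E) (map (eval (FI ar E) \<rho>) ts)))"
    using calculation eqc_wf wfE by blast
  ultimately have "cls ar E (Fun f (map (rep ar E) (map (eval (FI ar E) \<rho>) ts))) = cls ar E (Fun f (map (subst \<sigma>) ts))"
    using cls_eq by blast
  moreover have "eval (FI ar E) \<rho> (Fun f ts) = FI ar E f (map (eval (FI ar E) \<rho>) ts)" by simp
  ultimately show ?case using FI_def[of ar E f "map (eval (FI ar E) \<rho>) ts"] by simp
qed

lemma FB_closed: "closed_under ar (FI ar E) (FB ar E V)"
  unfolding closed_under_def
proof (intro allI impI)
  fix f and cs :: "('f, nat) trm set list"
  assume a: "length cs = ar f \<and> set cs \<subseteq> FB ar E V"
  then have "\<forall>c\<in>set cs. \<exists>t. wf_trm ar t \<and> vars t \<subseteq> V \<and> c = cls ar E t"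
    unfolding FB_def by auto
  then obtain g where g: "\<And>c. c \<in> set cs \<Longrightarrow> wf_trm ar (g c) \<and> vars (g c) \<subseteq> V \<and> c = cls ar E (g c)"
    by metis
  have "eval (FI ar E) (\<lambda>v. v) (Fun f (map Var cs)) = cls ar E (subst g (Fun f (map Var cs)))"
    by (rule eval_FI) (use a g in auto)
  moreover have "eval (FI ar E) (\<lambda>v. v) (Fun f (map Var cs)) = FI ar E f cs"
    by (simp add: comp_def)
  moreover have "wf_trm ar (subst g (Fun f (map Var cs)))" "vars (subst g (Fun f (map Var cs))) \<subseteq> V"
    using a g by auto
  ultimately have "FI ar E f cs = cls ar E (subst g (Fun f (map Var cs)))" by simp
  then show "FI ar E f cs \<in> FB ar E V" unfolding FB_def
    using \<open>wf_trm ar (subst g (Fun f (map Var cs)))\<close> \<open>vars (subst g (Fun f (map Var cs))) \<subseteq> V\<close> by blast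
qed

lemma FB_model: "model ar E (FB ar E V) (FI ar E)"
  unfolding model_def
proof (intro conjI FB_closed ballI allI impI, clarify)
  fix l r and \<rho> :: "nat \<Rightarrow> ('f, nat) trm set" assume lr: "(l, r) \<in> E" and \<rho>: "\<forall>v. \<rho> v \<in> FB ar E V"
  have ev: "eval (FI ar E) \<rho> t = cls ar E (subst (\<lambda>v. rep ar E (\<rho> v)) t)" if "wf_trm ar t" for t
    by (rule eval_FI) (use that \<rho> FB_rep in auto)
  have "eqc ar E (subst (\<lambda>v. rep ar E (\<rho> v)) l) (subst (\<lambda>v. rep ar E (\<rho> v)) r)"
    using lr \<rho> FB_rep by (intro eqc.eqc_ax) auto
  moreover have "wf_trm ar l" "wf_trm ar r" using lr wfE by auto
  moreover have "wf_trm ar (subst (\<lambda>v. rep ar E (\<rho> v)) l)" "wf_trm ar (subst (\<lambda>v. rep ar E (\<rho> v)) r)"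
    using calculation eqc_wf wfE by blast+
  ultimately show "eval (FI ar E) \<rho> l = eval (FI ar E) \<rho> r"
    using ev cls_eq by simp
qed

end



lemma gen_sub_terms:
  "gen_sub ar I S \<subseteq> {eval I (\<lambda>x. x) u | u. wf_trm ar u \<and> vars u \<subseteq> S}"
proof -
  let ?T = "{eval I (\<lambda>x. x) u | u. wf_trm ar u \<and> vars u \<subseteq> S}"
  have "S \<subseteq> ?T"
  proof
    fix x assume "x \<in> S"
    then show "x \<in> ?T" by (intro CollectI exI[of _ "Var x"]) auto
  qed
  moreover have "closed_under ar I ?T"
    unfolding closed_under_def
  proof (intro allI impI)
    fix f as assume a: "length as = ar f \<and> set as \<subseteq> ?T"
    then have "\<forall>x\<in>set as. \<exists>u. wf_trm ar u \<and> vars u \<subseteq> S \<and> x = eval I (\<lambda>x. x) u" by blast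
    then obtain g where g: "\<And>x. x \<in> set as \<Longrightarrow> wf_trm ar (g x) \<and> vars (g x) \<subseteq> S \<and> x = eval I (\<lambda>x. x) (g x)"
      by metis
    have "map (eval I (\<lambda>x. x)) (map g as) = as"
      by (rule map_idI[of as "eval I (\<lambda>x. x) \<circ> g", unfolded map_map[symmetric]]) (use g in auto)
    then have "eval I (\<lambda>x. x) (Fun f (map g as)) = I f as" by simp
    moreover have "wf_trm ar (Fun f (map g as))" "vars (Fun f (map g as)) \<subseteq> S" using a g by auto
    ultimately show "I f as \<in> ?T" by (metis (mono_tags, lifting) mem_Collect_eq)
  qed
  ultimately show ?thesis unfolding gen_sub_def by blast
qed

context wfE begin

lemma pointed_eqc: "pointed_var ar E z \<Longrightarrow> wf_trm ar t \<Longrightarrow> vars t = {} \<Longrightarrow> eqc ar E t z"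
  unfolding pointed_var_def by blast

lemma exists_q:
  assumes pm: "protomodular_on ar E z TYPE(('f, nat) trm set)" and pt: "pointed_var ar E z"
  shows "\<exists>q::(('f, nat) trm). wf_trm ar q \<and> eqc ar E (subst (\<lambda>_. Var 0) q) z \<and>
             eqc ar E (subst (\<lambda>v. if v = 0 then Var 0 else z) q) (Var 0)"
proof -
  have wfz: "wf_trm ar z" and gz: "vars z = {}" using pt by (auto simp: pointed_var_def)
  define B where "B = FB ar E {0, 1}"
  define D where "D = FB ar E {1}"
  define p where "p c = cls ar E (subst (\<lambda>_. Var 1) (rep ar E c))" for c
  define s where "s = (\<lambda>c::('f, nat) trm set. c)"
  have DB: "D \<subseteq> B" unfolding D_def B_def FB_def by auto
  have mB: "model ar E B (FI ar E)" and mD: "model ar E D (FI ar E)"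
    unfolding B_def D_def by (rule FB_model)+
  have pD: "p u \<in> D" if "u \<in> B" for u
  proof -
    have "wf_trm ar (rep ar E u)" using that FB_rep B_def by auto
    then show ?thesis unfolding p_def D_def FB_def
      by (auto intro!: exI[of _ "subst (\<lambda>_. Var 1) (rep ar E u)"] wf_subst simp: vars_subst split: if_splits)
  qed
  have hp: "is_hom ar B (FI ar E) D (FI ar E) p"
    unfolding is_hom_def
  proof (intro conjI ballI allI impI pD)
    fix f as assume a: "length as = ar f \<and> set as \<subseteq> B"
    have wr: "\<And>x. x \<in> set as \<Longrightarrow> wf_trm ar (rep ar E x)" using a FB_rep B_def by blast
    define w where "w = Fun f (map (rep ar E) as)"
    have ww: "wf_trm ar w" using a wr by (auto simp: w_def)
    have s1: "\<forall>n. wf_trm ar ((\<lambda>_. Var 1) n :: ('f, nat) trm)" by simp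
    have "eqc ar E (subst (\<lambda>_. Var 1) (rep ar E (cls ar E w))) (subst (\<lambda>_. Var 1) w)"
      by (rule eqc_subst[OF _ s1]) (use rep_cls[OF ww] in blast)
    moreover have "list_all2 (eqc ar E) (map (subst (\<lambda>_. Var 1)) (map (rep ar E) as))
        (map (rep ar E) (map p as))"
      unfolding list.rel_map
    proof (rule list.rel_refl_strong)
      fix x assume x: "x \<in> set as"
      have wx: "wf_trm ar (subst (\<lambda>_. Var 1) (rep ar E x))" using wr[OF x] by (auto intro: wf_subst)
      show "eqc ar E (subst (\<lambda>_. Var 1) (rep ar E x)) (rep ar E (p x))"
        unfolding p_def using rep_cls[OF wx] by (blast intro: eqc.eqc_sym)
    qed
    then have "eqc ar E (subst (\<lambda>_. Var 1) w) (Fun f (map (rep ar E) (map p as)))"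
      unfolding w_def using a by (auto intro: eqc.eqc_cong)
    ultimately have e: "eqc ar E (subst (\<lambda>_. Var 1) (rep ar E (cls ar E w))) (Fun f (map (rep ar E) (map p as)))"
      by (rule eqc.eqc_trans)
    have "p (FI ar E f as) = cls ar E (subst (\<lambda>_. Var 1) (rep ar E (cls ar E w)))"
      unfolding p_def FI_def w_def by simp
    also have "\<dots> = cls ar E (Fun f (map (rep ar E) (map p as)))"
      using e eqc_wf wfE cls_eq by metis
    also have "\<dots> = FI ar E f (map p as)" unfolding FI_def by simp
    finally show "p (FI ar E f as) = FI ar E f (map p as)" .
  qed
  have hs: "is_hom ar D (FI ar E) B (FI ar E) s"
    unfolding is_hom_def s_def using DB by auto
  have ps: "\<forall>d\<in>D. p (s d) = d"
  proof
    fix d assume "d \<in> D"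
    then obtain t where t: "wf_trm ar t" "vars t \<subseteq> {1}" "d = cls ar E t" unfolding D_def FB_def by auto
    have s1: "\<forall>n. wf_trm ar ((\<lambda>_. Var 1) n :: ('f, nat) trm)" by simp
    have "eqc ar E (subst (\<lambda>_. Var 1) (rep ar E d)) (subst (\<lambda>_. Var 1) t)"
      by (rule eqc_subst[OF _ s1]) (use rep_cls[OF t(1)] t(3) in blast)
    moreover have "subst (\<lambda>_. Var 1) t = t"
      using subst_cong[of t "\<lambda>_. Var 1" Var] t(2) by auto
    ultimately have "eqc ar E (subst (\<lambda>_. Var 1) (rep ar E d)) t" by simp
    then show "p (s d) = d" unfolding p_def s_def using t cls_eq eqc_wf wfE by metis
  qed
  define K where "K = {b \<in> B. p b = eval (FI ar E) (\<lambda>_. undefined) z}"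
  have "B \<subseteq> gen_sub ar (FI ar E) (K \<union> s ` D)"
    using pm mB mD hp hs ps unfolding protomodular_on_def K_def by blast
  moreover have v0: "cls ar E (Var 0) \<in> B" unfolding B_def FB_def by auto
  ultimately have "cls ar E (Var 0) \<in> gen_sub ar (FI ar E) (K \<union> D)" unfolding s_def by auto
  then obtain u where u: "wf_trm ar u" "vars u \<subseteq> K \<union> D" "eval (FI ar E) (\<lambda>x. x) u = cls ar E (Var 0)"
    using gen_sub_terms[of ar "FI ar E" "K \<union> D"] by blast
  have ez: "eval (FI ar E) (\<lambda>_. undefined) z = cls ar E z"
    using eval_FI[of z Var] wfz gz by simp
  define \<tau> where "\<tau> g = (if g \<in> K then (SOME t. wf_trm ar t \<and> g = cls ar E t)
                         else (SOME t. wf_trm ar t \<and> vars t \<subseteq> {1} \<and> g = cls ar E t))" for g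
  have \<tau>K: "wf_trm ar (\<tau> g) \<and> g = cls ar E (\<tau> g)" if "g \<in> K" for g
  proof -
    have "\<exists>t. wf_trm ar t \<and> g = cls ar E t" using that unfolding K_def B_def FB_def by auto
    from someI_ex[OF this] show ?thesis unfolding \<tau>_def using that by simp
  qed
  have \<tau>D: "wf_trm ar (\<tau> g) \<and> vars (\<tau> g) \<subseteq> {1} \<and> g = cls ar E (\<tau> g)" if "g \<in> D" "g \<notin> K" for g
  proof -
    have "\<exists>t. wf_trm ar t \<and> vars t \<subseteq> {1} \<and> g = cls ar E t" using that unfolding D_def FB_def by auto
    from someI_ex[OF this] show ?thesis unfolding \<tau>_def using that(2) by simp
  qed
  have \<tau>all: "wf_trm ar (\<tau> g) \<and> g = cls ar E (\<tau> g)" if "g \<in> vars u" for g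
    using that u(2) \<tau>K \<tau>D by blast
  have "eval (FI ar E) (\<lambda>x. x) u = cls ar E (subst \<tau> u)"
    by (rule eval_FI) (use u(1) \<tau>all in auto)
  moreover have wsu: "wf_trm ar (subst \<tau> u)" using u(1) \<tau>all by (auto intro: wf_subst)
  ultimately have e0: "eqc ar E (Var 0) (subst \<tau> u)" using u(3) cls_eq by (metis wf_trm.simps(1))
  define \<tau>' where "\<tau>' g = (if g \<in> K then \<tau> g else subst (\<lambda>_. z) (\<tau> g))" for g
  define q where "q = subst \<tau>' u"
  have w\<tau>': "wf_trm ar (\<tau>' g)" if "g \<in> vars u" for g
    using \<tau>all[OF that] wfz by (auto simp: \<tau>'_def intro: wf_subst)
  have wq: "wf_trm ar q" unfolding q_def using u(1) w\<tau>' by (auto intro: wf_subst)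
  define \<zeta> where "\<zeta> v = (if v = 0 then Var 0 else z)" for v :: nat
  have w\<zeta>: "\<forall>n. wf_trm ar (\<zeta> n)" using wfz by (simp add: \<zeta>_def)
  have "subst \<zeta> q = subst \<zeta> (subst \<tau> u)"
    unfolding q_def subst_subst
  proof (rule subst_cong)
    fix g assume g: "g \<in> vars u"
    show "subst \<zeta> (\<tau>' g) = subst \<zeta> (\<tau> g)"
    proof (cases "g \<in> K")
      case False
      then have "vars (\<tau> g) \<subseteq> {1}" using g u(2) \<tau>D by blast
      then have "subst \<zeta> (\<tau> g) = subst (\<lambda>_. z) (\<tau> g)"
        by (intro subst_cong) (auto simp: \<zeta>_def)
      moreover have "subst \<zeta> (subst (\<lambda>_. z) (\<tau> g)) = subst (\<lambda>_. z) (\<tau> g)"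
        unfolding subst_subst using ground_subst_id[OF gz] by simp
      ultimately show ?thesis using False by (simp add: \<tau>'_def)
    qed (simp add: \<tau>'_def)
  qed
  moreover have "eqc ar E (subst \<zeta> (Var 0)) (subst \<zeta> (subst \<tau> u))"
    by (rule eqc_subst[OF e0 w\<zeta>])
  ultimately have Q2: "eqc ar E (subst \<zeta> q) (Var 0)"
    by (simp add: \<zeta>_def eqc.eqc_sym)
  have s0: "\<forall>n. wf_trm ar ((\<lambda>_. Var 0) n :: ('f, nat) trm)" by simp
  have "eqc ar E (subst (\<lambda>g. subst (\<lambda>_. Var 0) (\<tau>' g)) u) (subst (\<lambda>_. z) u)"
  proof (rule eqc_subst_cong[OF u(1)])
    fix g assume g: "g \<in> vars u"
    show "eqc ar E (subst (\<lambda>_. Var 0) (\<tau>' g)) z"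
    proof (cases "g \<in> K")
      case True
      then have gB: "g \<in> B" and pg: "p g = cls ar E z" using ez unfolding K_def by auto
      have wr: "wf_trm ar (rep ar E g)" and cr: "cls ar E (rep ar E g) = g"
        using FB_rep gB B_def by auto
      have w1: "wf_trm ar (subst (\<lambda>_. Var 1) (rep ar E g))" using wr by (auto intro: wf_subst)
      have "eqc ar E (subst (\<lambda>_. Var 1) (rep ar E g)) z"
        using pg w1 wfz cls_eq unfolding p_def by metis
      moreover have "eqc ar E (\<tau> g) (rep ar E g)"
        using \<tau>K[OF True] cr wr cls_eq by metis
      then have "eqc ar E (subst (\<lambda>_. Var 1) (\<tau> g)) (subst (\<lambda>_. Var 1) (rep ar E g))"
        by (rule eqc_subst) simp
      ultimately have "eqc ar E (subst (\<lambda>_. Var 1) (\<tau> g)) z" by (rule eqc.eqc_trans[rotated])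
      from eqc_subst[OF this s0] show ?thesis
        using True ground_subst_id[OF gz] by (simp add: \<tau>'_def subst_subst)
    next
      case False
      have "wf_trm ar (subst (\<lambda>_. z) (\<tau> g))" "vars (subst (\<lambda>_. z) (\<tau> g)) = {}"
        using \<tau>all[OF g] wfz gz by (auto intro: wf_subst simp: vars_subst)
      then show ?thesis using False pointed_eqc[OF pt] ground_subst_id
        by (simp add: \<tau>'_def subst_subst ground_subst_id[OF gz])
    qed
  qed
  moreover have "eqc ar E (subst (\<lambda>_. z) u) z"
    by (rule pointed_eqc[OF pt]) (use u(1) wfz gz in \<open>auto intro: wf_subst simp: vars_subst\<close>)
  ultimately have Q1: "eqc ar E (subst (\<lambda>_. Var 0) q) z"
    unfolding q_def subst_subst by (rule eqc.eqc_trans)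
  show ?thesis using wq Q1 Q2 unfolding \<zeta>_def by blast
qed

end



definition app2 :: "('f, nat) trm \<Rightarrow> ('f, nat) trm \<Rightarrow> ('f, nat) trm \<Rightarrow> ('f, nat) trm" where
  "app2 q a b = subst (\<lambda>v. if v = 0 then a else b) q"

definition zs :: "('f, nat) trm \<Rightarrow> nat set \<Rightarrow> ('f, nat) trm \<Rightarrow> ('f, nat) trm" where
  "zs z S s = subst (\<lambda>v. if v \<in> S then z else Var v) s"

lemma app2_subst: "subst \<sigma> (app2 q a b) = app2 q (subst \<sigma> a) (subst \<sigma> b)"
  unfolding app2_def subst_subst by (rule subst_cong) simp

lemma zs_app2: "zs z S (app2 q a b) = app2 q (zs z S a) (zs z S b)"
  unfolding zs_def by (rule app2_subst)

lemma zs_zs: "vars z = {} \<Longrightarrow> zs z S (zs z S' s) = zs z (S \<union> S') s"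
  unfolding zs_def subst_subst by (rule subst_cong) (auto simp: ground_subst_id)

locale setting = wfE ar E for ar :: "'f \<Rightarrow> nat" and E +
  fixes z q :: "('f, nat) trm"
  assumes pt: "pointed_var ar E z" and wq: "wf_trm ar q"
    and Q1: "eqc ar E (subst (\<lambda>_. Var 0) q) z"
    and Q2: "eqc ar E (subst (\<lambda>v. if v = 0 then Var 0 else z) q) (Var 0)"
begin

lemma wfz: "wf_trm ar z" and gz: "vars z = {}" using pt by (auto simp: pointed_var_def)

lemma wf_app2: "wf_trm ar a \<Longrightarrow> wf_trm ar b \<Longrightarrow> wf_trm ar (app2 q a b)"
  unfolding app2_def using wq by (auto intro: wf_subst)

lemma wf_zs: "wf_trm ar a \<Longrightarrow> wf_trm ar (zs z S a)"
  unfolding zs_def using wfz by (auto intro: wf_subst)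

lemma app2_Q1: "wf_trm ar a \<Longrightarrow> eqc ar E (app2 q a a) z"
  using eqc_subst[OF Q1, of "\<lambda>_. a"] unfolding app2_def subst_subst
  by (simp add: ground_subst_id[OF gz])

lemma app2_cong: "eqc ar E a a' \<Longrightarrow> eqc ar E b b' \<Longrightarrow> eqc ar E (app2 q a b) (app2 q a' b')"
  unfolding app2_def by (rule eqc_subst_cong[OF wq]) auto

lemma zs_eqc: "eqc ar E a b \<Longrightarrow> eqc ar E (zs z S a) (zs z S b)"
  unfolding zs_def by (rule eqc_subst) (use wfz in auto)

lemma zs_z: "zs z S z = z"
  unfolding zs_def by (rule ground_subst_id[OF gz])

lemma eval_app2: "eval I \<rho> (app2 q a b) = eval I (\<lambda>v. if v = 0 then eval I \<rho> a else eval I \<rho> b) q"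
  unfolding app2_def eval_subst by (rule eval_cong) simp

lemma eval_zs: "eval I \<rho> (zs z S a) = eval I (\<lambda>v. if v \<in> S then eval I (\<lambda>_. undefined) z else \<rho> v) a"
  unfolding zs_def eval_subst by (rule eval_cong) (auto intro: ground_eval[OF gz])

end

locale setting2 = setting ar E z q for ar :: "'f \<Rightarrow> nat" and E z q +
  fixes A X Y :: "'a set" and I :: "'f \<Rightarrow> 'a list \<Rightarrow> 'a"
  assumes mA: "model ar E A I" and XA: "X \<subseteq> A" and cX: "closed_under ar I X"
    and YA: "Y \<subseteq> A" and cY: "closed_under ar I Y"
begin

definition "zA = eval I (\<lambda>_. undefined) z"

lemma clA: "closed_under ar I A" using mA by (simp add: model_def)

lemma zA_in: "zA \<in> A"
  unfolding zA_def by (rule eval_closed[OF clA wfz]) (use gz in auto)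

lemma eval_z: "eval I \<rho> z = zA"
  unfolding zA_def by (rule ground_eval[OF gz])

lemma qA_self: "x \<in> A \<Longrightarrow> eval I (\<lambda>_. x) q = zA"
  using eqc_eval[OF Q1 mA, of "\<lambda>_. x"] by (simp add: eval_subst eval_z)

lemma qA_zero: "x \<in> A \<Longrightarrow> eval I (\<lambda>v. if v = 0 then x else zA) q = x"
proof -
  assume x: "x \<in> A"
  have "\<forall>v. (if v = 0 then x else zA) \<in> A" using x zA_in by auto
  from eqc_eval[OF Q2 mA this] show ?thesis
    by (simp add: eval_subst eval_z if_distrib cong: if_cong)
qed

lemma const_zero: "length xs = ar f \<Longrightarrow> I f (map (\<lambda>_. zA) xs) = zA"
proof -
  assume l: "length xs = ar f"
  have w: "wf_trm ar (Fun f (map (\<lambda>_. z) xs))" using l wfz by auto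
  have g: "vars (Fun f (map (\<lambda>_. z) xs)) = {}" using gz by auto
  have "eval I (\<lambda>_. zA) (Fun f (map (\<lambda>_. z) xs)) = eval I (\<lambda>_. zA) z"
    by (rule eqc_eval[OF pointed_eqc[OF pt w g] mA]) (use zA_in in auto)
  then show ?thesis by (simp add: eval_z comp_def)
qed

lemma eq2_eval:
  assumes "eq2 ar E I A X' s t" "X' \<subseteq> A" "\<And>x. x \<in> X' \<Longrightarrow> h x \<in> A"
    "\<And>f xs. length xs = ar f \<Longrightarrow> set xs \<subseteq> X' \<Longrightarrow> h (I f xs) = I f (map h xs)"
  shows "eval I (\<lambda>g. case g of Inl a \<Rightarrow> a | Inr x \<Rightarrow> h x) s = eval I (\<lambda>g. case g of Inl a \<Rightarrow> a | Inr x \<Rightarrow> h x) t"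
  using assms(1) unfolding eq2_def
proof (rule pres_eval[OF _ mA])
  fix g assume "g \<in> gens2 A X'"
  then show "(case g of Inl a \<Rightarrow> a | Inr x \<Rightarrow> h x) \<in> A" using assms(3) by (auto simp: gens2_def)
next
  fix s t :: "('f, 'a + 'a) trm" assume "rel2 ar I A X' s t"
  then show "eval I (\<lambda>g. case g of Inl a \<Rightarrow> a | Inr x \<Rightarrow> h x) s = eval I (\<lambda>g. case g of Inl a \<Rightarrow> a | Inr x \<Rightarrow> h x) t"
    unfolding rel2_def diag_def using assms(4) by (auto simp: comp_def)
qed

lemma eval_ground_as: "eval I \<rho> (ground_as z) = zA"
  unfolding ground_as_def eval_subst by (rule eval_z)

lemma const_zero': "length xs = ar f \<Longrightarrow> zA = I f (map (\<lambda>_. zA) xs)"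
  by (metis const_zero)


lemma eq2_eval_zero:
  assumes "eq2 ar E I A X' s t" "X' \<subseteq> A"
  shows "eval I (\<lambda>g. case g of Inl a \<Rightarrow> a | Inr x \<Rightarrow> zA) s = eval I (\<lambda>g. case g of Inl a \<Rightarrow> a | Inr x \<Rightarrow> zA) t"
  by (rule eq2_eval[OF assms]) (auto simp: zA_in const_zero)

lemma eq2_eval_id:
  assumes "eq2 ar E I A X' s t" "X' \<subseteq> A"
  shows "eval I (\<lambda>g. case g of Inl a \<Rightarrow> a | Inr x \<Rightarrow> x) s = eval I (\<lambda>g. case g of Inl a \<Rightarrow> a | Inr x \<Rightarrow> x) t"
  by (rule eq2_eval[OF assms]) (use assms(2) in auto)

lemma A1_sub_CA: "comm_A1 ar E z A I X Y \<subseteq> comm_CA ar E z A I X Y"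
proof
  fix e assume "e \<in> comm_A1 ar E z A I X Y"
  then obtain T where T: "e = fold3 I T" "wf_over ar (gens3 A X Y) T"
    "eq2 ar E I A X (to_AX z T) (ground_as z)" "eq2 ar E I A Y (to_AY z T) (ground_as z)"
    unfolding comm_A1_def by blast
  define V where "V = vars T"
  obtain enc :: "'a + 'a + 'a \<Rightarrow> nat" and n where "enc ` V = {i. i < n}" and inj: "inj_on enc V"
    using finite_imp_inj_to_nat_seg[OF finite_vars[of T]] unfolding V_def by blast
  define dec where "dec = inv_into V enc"
  have dec: "\<And>g. g \<in> V \<Longrightarrow> dec (enc g) = g" by (simp add: dec_def inv_into_f_f inj)
  define F3 where "F3 g = (case g of Inl a \<Rightarrow> a | Inr (Inl x) \<Rightarrow> x | Inr (Inr y) \<Rightarrow> y)" for g :: "'a + 'a + 'a"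
  define isX where "isX g = (\<exists>x. g = Inr (Inl x))" for g :: "'a + 'a + 'a"
  define isY where "isY g = (\<exists>y. g = Inr (Inr y))" for g :: "'a + 'a + 'a"
  define \<rho> where "\<rho> m = (if m \<in> enc ` V then F3 (dec m) else zA)" for m
  define Xv where "Xv = {m \<in> enc ` V. isX (dec m)}"
  define Yv where "Yv = {m \<in> enc ` V. isY (dec m)}"
  define t' where "t' = subst (\<lambda>g. Var (enc g)) T"
  define s1 where "s1 = app2 q t' (zs z Yv t')"
  define c where "c = app2 q s1 (zs z Xv s1)"
  have gV: "g \<in> gens3 A X Y" if "g \<in> V" for g using T(2) that by (auto simp: wf_over_def V_def)
  have F3A: "F3 g \<in> A" if "g \<in> gens3 A X Y" for g
    using that XA YA by (auto simp: gens3_def F3_def)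
  have \<rho>A: "\<forall>v. \<rho> v \<in> A" using F3A gV dec zA_in by (auto simp: \<rho>_def)
  have \<rho>X: "\<rho> ` Xv \<subseteq> X"
  proof
    fix a assume "a \<in> \<rho> ` Xv"
    then obtain g x where "g \<in> V" "g = Inr (Inl x)" "a = \<rho> (enc g)"
      by (auto simp: Xv_def isX_def dec)
    then show "a \<in> X" using gV[of g] dec by (auto simp: \<rho>_def F3_def gens3_def)
  qed
  have \<rho>Y: "\<rho> ` Yv \<subseteq> Y"
  proof
    fix a assume "a \<in> \<rho> ` Yv"
    then obtain g y where "g \<in> V" "g = Inr (Inr y)" "a = \<rho> (enc g)"
      by (auto simp: Yv_def isY_def dec)
    then show "a \<in> Y" using gV[of g] dec by (auto simp: \<rho>_def F3_def gens3_def)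
  qed
  have disj: "Xv \<inter> Yv = {}" by (auto simp: Xv_def Yv_def isX_def isY_def)
  have wt': "wf_trm ar t'" using T(2) unfolding t'_def wf_over_def by (auto intro: wf_subst)
  have ws1: "wf_trm ar s1" unfolding s1_def by (intro wf_app2 wf_zs wt')
  have wc: "wf_trm ar c" unfolding c_def by (intro wf_app2 wf_zs ws1)
  have cX: "eqc ar E (zs z Xv c) z"
    unfolding c_def zs_app2 zs_zs[OF gz] Un_absorb by (rule app2_Q1[OF wf_zs[OF ws1]])
  have "eqc ar E (zs z Yv s1) z"
    unfolding s1_def zs_app2 zs_zs[OF gz] Un_absorb by (rule app2_Q1[OF wf_zs[OF wt']])
  moreover have "eqc ar E (zs z Yv (zs z Xv s1)) z"
  proof -
    have "zs z Yv (zs z Xv s1) = zs z Xv (zs z Yv s1)" by (simp add: zs_zs[OF gz] Un_commute)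
    moreover have "eqc ar E (zs z Xv (zs z Yv s1)) (zs z Xv z)"
      by (rule zs_eqc) fact
    ultimately show ?thesis by (simp add: zs_z)
  qed
  ultimately have "eqc ar E (zs z Yv c) (app2 q z z)"
    unfolding c_def zs_app2 by (rule app2_cong)
  then have cY: "eqc ar E (zs z Yv c) z" using app2_Q1[OF wfz] by (rule eqc.eqc_trans)
  have ct: "comm_term ar E z Xv Yv c"
    unfolding comm_term_def using wc disj cX cY by (simp add: zs_def)
  have tr: "eval I (\<lambda>v. if v \<in> {m \<in> enc ` V. P (dec m)} then zA else \<rho> v) t'
          = eval I (\<lambda>g. if P g then zA else F3 g) T" for P
    unfolding t'_def eval_subst
    by (rule eval_cong) (auto simp: V_def[symmetric] dec \<rho>_def)
  have ez: "eval I \<rho> (zs z S a) = eval I (\<lambda>v. if v \<in> S then zA else \<rho> v) a" for S a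
    by (simp only: eval_zs eval_z)
  have W11: "eval I \<rho> t' = fold3 I T"
    using tr[of "\<lambda>_. False"] by (simp add: T(1) fold3_def F3_def)
  have W11A: "fold3 I T \<in> A"
    unfolding fold3_def using T(2)
    by (intro eval_closed[OF clA]) (auto simp: wf_over_def intro!: F3A[unfolded F3_def])
  have Wid: "\<And>x. x \<in> X' \<Longrightarrow> (\<lambda>x. x) x \<in> A" if "X' \<subseteq> A" for X' :: "'a set" using that by auto
  have W10: "eval I \<rho> (zs z Yv t') = zA"
  proof -
    have "eval I (\<lambda>g. case g of Inl a \<Rightarrow> a | Inr x \<Rightarrow> x) (to_AX z T)
        = eval I (\<lambda>g. case g of Inl a \<Rightarrow> a | Inr x \<Rightarrow> x) (ground_as z)"
      using eq2_eval[OF T(3) XA, of "\<lambda>x. x"] XA by auto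
    moreover have "eval I (\<lambda>g. case g of Inl a \<Rightarrow> a | Inr x \<Rightarrow> x) (to_AX z T)
        = eval I (\<lambda>g. if isY g then zA else F3 g) T"
      unfolding to_AX_def eval_subst
      by (rule eval_cong) (auto simp: isY_def F3_def eval_ground_as split: sum.splits)
    ultimately show ?thesis using tr[of isY] ez by (simp add: eval_ground_as Yv_def)
  qed
  have W01: "eval I \<rho> (zs z Xv t') = zA"
  proof -
    have "eval I (\<lambda>g. case g of Inl a \<Rightarrow> a | Inr x \<Rightarrow> x) (to_AY z T)
        = eval I (\<lambda>g. case g of Inl a \<Rightarrow> a | Inr x \<Rightarrow> x) (ground_as z)"
      using eq2_eval[OF T(4) YA, of "\<lambda>x. x"] YA by auto
    moreover have "eval I (\<lambda>g. case g of Inl a \<Rightarrow> a | Inr x \<Rightarrow> x) (to_AY z T)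
        = eval I (\<lambda>g. if isX g then zA else F3 g) T"
      unfolding to_AY_def eval_subst
      by (rule eval_cong) (auto simp: isX_def F3_def eval_ground_as split: sum.splits)
    ultimately show ?thesis using tr[of isX] ez by (simp add: eval_ground_as Xv_def)
  qed
  have W00: "eval I \<rho> (zs z Xv (zs z Yv t')) = zA"
  proof -
    have "eval I (\<lambda>g. case g of Inl a \<Rightarrow> a | Inr x \<Rightarrow> zA) (to_AX z T)
        = eval I (\<lambda>g::'a + 'a. case g of Inl a \<Rightarrow> a | Inr x \<Rightarrow> zA) (ground_as z)"
      using eq2_eval_zero[OF T(3) XA] by auto
    moreover have "eval I (\<lambda>g. case g of Inl a \<Rightarrow> a | Inr x \<Rightarrow> zA) (to_AX z T)
        = eval I (\<lambda>g. if isX g \<or> isY g then zA else F3 g) T"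
      unfolding to_AX_def eval_subst
      by (rule eval_cong) (auto simp: isX_def isY_def F3_def eval_ground_as split: sum.splits)
    moreover have "Xv \<union> Yv = {m \<in> enc ` V. isX (dec m) \<or> isY (dec m)}"
      by (auto simp: Xv_def Yv_def)
    ultimately show ?thesis using tr[of "\<lambda>g. isX g \<or> isY g"] ez
      by (simp add: eval_ground_as zs_zs[OF gz])
  qed
  have E1: "eval I \<rho> s1 = fold3 I T"
    unfolding s1_def eval_app2 W11 W10 by (rule qA_zero[OF W11A])
  have E2: "eval I \<rho> (zs z Xv s1) = zA"
    unfolding s1_def zs_app2 eval_app2 W01 W00 using qA_self[OF zA_in] by simp
  have "eval I \<rho> c = eval I (\<lambda>v. if v = 0 then fold3 I T else zA) q"
    unfolding c_def eval_app2 E1 E2 ..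
  then have "eval I \<rho> c = e" using qA_zero[OF W11A] T(1) by simp
  then show "e \<in> comm_CA ar E z A I X Y"
    unfolding comm_CA_def using ct \<rho>A \<rho>X \<rho>Y by blast
qed

end



context setting2 begin

lemma CA_sub_A1: "comm_CA ar E z A I X Y \<subseteq> comm_A1 ar E z A I X Y"
proof
  fix e assume "e \<in> comm_CA ar E z A I X Y"
  then have "\<exists>t \<rho> Xv Yv. e = eval I \<rho> t \<and> comm_term ar E z Xv Yv t \<and> (\<forall>v. \<rho> v \<in> A) \<and>
      \<rho> ` Xv \<subseteq> X \<and> \<rho> ` Yv \<subseteq> Y"
    unfolding comm_CA_def by (simp only: mem_Collect_eq)
  then obtain t \<rho> Xv Yv where e: "e = eval I \<rho> t" and ct: "comm_term ar E z Xv Yv t"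
    and \<rho>A: "\<forall>v. \<rho> v \<in> A" and \<rho>X: "\<rho> ` Xv \<subseteq> X" and \<rho>Y: "\<rho> ` Yv \<subseteq> Y"
    by (elim exE conjE)
  have wt: "wf_trm ar t" and disj: "Xv \<inter> Yv = {}"
    and eX: "eqc ar E (subst (\<lambda>v. if v \<in> Xv then z else Var v) t) z"
    and eY: "eqc ar E (subst (\<lambda>v. if v \<in> Yv then z else Var v) t) z"
    using ct unfolding comm_term_def by auto
  define \<tau> :: "nat \<Rightarrow> ('f, 'a + 'a + 'a) trm" where
    "\<tau> v = (if v \<in> Xv then Var (Inr (Inl (\<rho> v))) else if v \<in> Yv then Var (Inr (Inr (\<rho> v)))
           else Var (Inl (\<rho> v)))" for v
  define T where "T = subst \<tau> t"
  have wT: "wf_over ar (gens3 A X Y) T"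
    unfolding wf_over_def T_def
  proof
    show "wf_trm ar (subst \<tau> t)" using wt by (auto intro: wf_subst simp: \<tau>_def)
    show "vars (subst \<tau> t) \<subseteq> gens3 A X Y"
      unfolding vars_subst using \<rho>A \<rho>X \<rho>Y by (auto simp: \<tau>_def gens3_def image_subset_iff split: if_splits)
  qed
  have fT: "fold3 I T = e"
    unfolding fold3_def T_def eval_subst e by (rule eval_cong) (simp add: \<tau>_def)
  define \<sigma>1 :: "nat \<Rightarrow> ('f, 'a + 'a) trm" where
    "\<sigma>1 v = (if v \<in> Xv then Var (Inr (\<rho> v)) else Var (Inl (\<rho> v)))" for v
  define \<sigma>2 :: "nat \<Rightarrow> ('f, 'a + 'a) trm" where
    "\<sigma>2 v = (if v \<in> Yv then Var (Inr (\<rho> v)) else Var (Inl (\<rho> v)))" for v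
  have gz1: "subst \<sigma> z = ground_as z" for \<sigma> :: "nat \<Rightarrow> ('f, 'a + 'a) trm"
    unfolding ground_as_def by (rule ground_subst[OF gz])
  have "to_AX z T = subst \<sigma>1 (subst (\<lambda>v. if v \<in> Yv then z else Var v) t)"
    unfolding to_AX_def T_def subst_subst
    by (rule subst_cong) (use disj in \<open>auto simp: \<tau>_def \<sigma>1_def gz1\<close>)
  moreover have "pres_eq ar E (gens2 A X) (rel2 ar I A X)
      (subst \<sigma>1 (subst (\<lambda>v. if v \<in> Yv then z else Var v) t)) (subst \<sigma>1 z)"
    by (rule eqc_pres[OF eY]) (use \<rho>A \<rho>X in \<open>auto simp: \<sigma>1_def wf_over_def gens2_def\<close>)
  ultimately have AX: "eq2 ar E I A X (to_AX z T) (ground_as z)"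
    unfolding eq2_def gz1 by simp
  have "to_AY z T = subst \<sigma>2 (subst (\<lambda>v. if v \<in> Xv then z else Var v) t)"
    unfolding to_AY_def T_def subst_subst
    by (rule subst_cong) (use disj in \<open>auto simp: \<tau>_def \<sigma>2_def gz1\<close>)
  moreover have "pres_eq ar E (gens2 A Y) (rel2 ar I A Y)
      (subst \<sigma>2 (subst (\<lambda>v. if v \<in> Xv then z else Var v) t)) (subst \<sigma>2 z)"
    by (rule eqc_pres[OF eX]) (use \<rho>A \<rho>Y in \<open>auto simp: \<sigma>2_def wf_over_def gens2_def\<close>)
  ultimately have AY: "eq2 ar E I A Y (to_AY z T) (ground_as z)"
    unfolding eq2_def gz1 by simp
  show "e \<in> comm_A1 ar E z A I X Y"
    unfolding comm_A1_def mem_Collect_eq using wT AX AY fT by (intro exI[of _ T]) simp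
qed

end

theorem theorem7p6:
  fixes ar :: "'f \<Rightarrow> nat"
    and E :: "(('f, nat) trm \<times> ('f, nat) trm) set"
    and z :: "('f, nat) trm"
    and A X Y :: "'a set"
    and I :: "'f \<Rightarrow> 'a list \<Rightarrow> 'a"
  assumes "semi_abelian_on ar E z TYPE(('f, nat) trm set)"
    and "model ar E A I"
    and "X \<subseteq> A" and "closed_under ar I X"
    and "Y \<subseteq> A" and "closed_under ar I Y"
  shows "comm_CA ar E z A I X Y = comm_A1 ar E z A I X Y"
proof -
  have wE: "\<forall>(l, r)\<in>E. wf_trm ar l \<and> wf_trm ar r" and pt: "pointed_var ar E z"
    and pm: "protomodular_on ar E z TYPE(('f, nat) trm set)"
    using assms(1) unfolding semi_abelian_on_def by auto
  interpret wfE ar E by unfold_locales (rule wE)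
  obtain q :: "('f, nat) trm" where q: "wf_trm ar q" "eqc ar E (subst (\<lambda>_. Var 0) q) z"
    "eqc ar E (subst (\<lambda>v. if v = 0 then Var 0 else z) q) (Var 0)"
    using exists_q[OF pm pt] by blast
  interpret setting2 ar E z q A X Y I
    by unfold_locales (use wE pt q assms in auto)
  show ?thesis using CA_sub_A1 A1_sub_CA by blast
qed


end
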